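(* Let $\{\zeta_k\}_{k\ge1}$ be i.i.d. standard exponential random variables, $\eta_i:=-\log\left(\sum_{k=1}^i\zeta_k\right)$ for $i\ge1$, and let $\{Z_{ij}\}_{1\le i<j}$ be i.i.d. standard normal random variables independent of the $\eta_i$. For $c\ge0$ define $$Y_c:=\sup_{i<j}\left\{\frac{\eta_i+\eta_j}{\sqrt2}+cZ_{ij}\right\}.$$ Then (i) $Y_c<\infty$ almost surely for every $c\ge0$; and (ii) if $(\gamma_m)_{m\ge1}$ is a sequence of nonnegative reals with $\gamma_m\to c$, then $Y_{\gamma_m}\xrightarrow{d}Y_c$ as $m\to\infty$. *)

theory Defs
  imports "HOL-Probability.Probability"
begin

definition eta_rv :: "(nat \<Rightarrow> 'a \<Rightarrow> real) \<Rightarrow> nat \<Rightarrow> 'a \<Rightarrow> real" where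
  "eta_rv \<zeta> i \<omega> = - ln (\<Sum>k\<in>{1..i}. \<zeta> k \<omega>)"

definition Y_rv :: "(nat \<Rightarrow> 'a \<Rightarrow> real) \<Rightarrow> (nat \<Rightarrow> nat \<Rightarrow> 'a \<Rightarrow> real) \<Rightarrow> real \<Rightarrow> 'a \<Rightarrow> ereal" where
  "Y_rv \<zeta> Z c \<omega> =
     (SUP p\<in>{(i, j). 1 \<le> i \<and> i < j}.
        ereal ((eta_rv \<zeta> (fst p) \<omega> + eta_rv \<zeta> (snd p) \<omega>) / sqrt 2 + c * Z (fst p) (snd p) \<omega>))"

definition joint_family :: "(nat \<Rightarrow> 'a \<Rightarrow> real) \<Rightarrow> (nat \<Rightarrow> nat \<Rightarrow> 'a \<Rightarrow> real) \<Rightarrow> nat + nat \<times> nat \<Rightarrow> 'a \<Rightarrow> real" where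
  "joint_family \<zeta> Z x = (case x of Inl k \<Rightarrow> \<zeta> k | Inr (i, j) \<Rightarrow> Z i j)"

definition joint_index :: "(nat + nat \<times> nat) set" where
  "joint_index = Inl ` {k. 1 \<le> k} \<union> Inr ` {(i, j). 1 \<le> i \<and> i < j}"

end

theory Submission
  imports Defs
begin

lemma sup_fin:
  fixes a b :: "'p \<Rightarrow> real"
  assumes fin: "\<And>K. finite {p\<in>P. a p + C * \<bar>b p\<bar> \<ge> K}" and p0: "p0 \<in> P" and C: "\<bar>\<gamma>\<bar> \<le> C"
  shows "(SUP p\<in>P. ereal (a p + \<gamma> * b p)) = ereal (Max ((\<lambda>p. a p + \<gamma> * b p) ` {p\<in>P. a p + C * \<bar>b p\<bar> \<ge> a p0 - C * \<bar>b p0\<bar>}))"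
proof -
  define F where "F = {p\<in>P. a p + C * \<bar>b p\<bar> \<ge> a p0 - C * \<bar>b p0\<bar>}"
  have Cn: "C \<ge> 0" using C by linarith
  have bnd: "\<bar>\<gamma> * b p\<bar> \<le> C * \<bar>b p\<bar>" for p
    by (simp add: abs_mult C mult_right_mono)
  have finF: "finite F" unfolding F_def by (rule fin)
  have p0F: "p0 \<in> F" unfolding F_def using p0 Cn by simp
  let ?f = "\<lambda>p. a p + \<gamma> * b p"
  have ne: "?f ` F \<noteq> {}" using p0F by auto
  have le: "?f p \<le> Max (?f ` F)" if "p \<in> P" for p
  proof (cases "p \<in> F")
    case True then show ?thesis using finF by auto
  next
    case False
    then have "a p + C * \<bar>b p\<bar> < a p0 - C * \<bar>b p0\<bar>" using that unfolding F_def by auto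
    moreover have "?f p \<le> a p + C * \<bar>b p\<bar>" using bnd[of p] by linarith
    moreover have "a p0 - C * \<bar>b p0\<bar> \<le> ?f p0" using bnd[of p0] by linarith
    moreover have "?f p0 \<le> Max (?f ` F)" using finF p0F by auto
    ultimately show ?thesis by linarith
  qed
  obtain q where q: "q \<in> F" "Max (?f ` F) = ?f q"
    using Max_in[OF finite_imageI[OF finF] ne] by auto
  have qP: "q \<in> P" using q unfolding F_def by auto
  have "(SUP p\<in>P. ereal (?f p)) = ereal (Max (?f ` F))"
  proof (rule antisym)
    show "(SUP p\<in>P. ereal (?f p)) \<le> ereal (Max (?f ` F))"
      by (rule SUP_least) (use le in auto)
    show "ereal (Max (?f ` F)) \<le> (SUP p\<in>P. ereal (?f p))"
      unfolding q(2) using qP by (rule SUP_upper)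
  qed
  then show ?thesis unfolding F_def .
qed

lemma tendsto_Max_fin:
  fixes g :: "'p \<Rightarrow> nat \<Rightarrow> real"
  assumes "finite F" "F \<noteq> {}" "\<And>p. p \<in> F \<Longrightarrow> g p \<longlonglongrightarrow> l p"
  shows "(\<lambda>m. Max ((\<lambda>p. g p m) ` F)) \<longlonglongrightarrow> Max (l ` F)"
  using assms
proof (induction F rule: finite_ne_induct)
  case (singleton x)
  then show ?case by simp
next
  case (insert x F)
  have "(\<lambda>m. max (g x m) (Max ((\<lambda>p. g p m) ` F))) \<longlonglongrightarrow> max (l x) (Max (l ` F))"
    using insert by (intro tendsto_max) auto
  then show ?case using insert by simp
qed

lemma amgm_aux:
  fixes s C :: real
  shows "4 * C * s \<le> s^2 / 4 + 16 * C^2"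
proof -
  have "0 \<le> (s/2 - 4*C)^2" by simp
  then show ?thesis by (simp add: power2_eq_square algebra_simps)
qed

lemma det_fin:
  fixes e :: "nat \<Rightarrow> real" and z :: "nat \<Rightarrow> nat \<Rightarrow> real"
  assumes U: "\<And>i. 1 \<le> i \<Longrightarrow> e i \<le> U - ln (real i)"
    and J: "\<And>i j. J \<le> j \<Longrightarrow> 1 \<le> i \<Longrightarrow> i < j \<Longrightarrow> \<bar>z i j\<bar> \<le> 4 * sqrt (ln (real j))"
    and C: "0 \<le> C"
  shows "finite {p\<in>{(i, j). 1 \<le> i \<and> i < j}. (e (fst p) + e (snd p)) / sqrt 2 + C * \<bar>z (fst p) (snd p)\<bar> \<ge> K}"
proof -
  define R where "R = 2 * \<bar>U\<bar> + 16 * C^2 - K"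
  define J' where "J' = max J (nat \<lceil>exp (4 * R)\<rceil> + 1)"
  have key: "(e i + e j) / sqrt 2 + C * \<bar>z i j\<bar> < K" if "1 \<le> i" "i < j" "J' \<le> j" for i j
  proof -
    have j1: "real j \<ge> 1" using that by simp
    have lnj: "0 \<le> ln (real j)" using j1 by simp
    have "real j > exp (4 * R)"
    proof -
      have "exp (4*R) \<le> real (nat \<lceil>exp (4 * R)\<rceil>)" by linarith
      moreover have "real (nat \<lceil>exp (4 * R)\<rceil>) + 1 \<le> real j" using that(3) unfolding J'_def by linarith
      ultimately show ?thesis by linarith
    qed
    then have "ln (real j) > 4 * R"
      using ln_less_cancel_iff[of "exp (4*R)" "real j"] j1 by simp
    have ei: "e i \<le> U"
    proof -
      have "0 \<le> ln (real i)" using that(1) by simp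
      then show ?thesis using U[OF that(1)] by linarith
    qed
    have ej: "e j \<le> U - ln (real j)" using U[of j] that by simp
    have s2: "1 \<le> sqrt (2::real)" by simp
    have "(e i + e j) / sqrt 2 \<le> (2*U - ln (real j)) / sqrt 2"
      using ei ej by (intro divide_right_mono) auto
    also have "\<dots> \<le> 2 * \<bar>U\<bar> - ln (real j) / 2"
    proof -
      have a: "2*U / sqrt 2 \<le> 2 * \<bar>U\<bar>"
      proof -
        have "2*U / sqrt 2 \<le> 2*\<bar>U\<bar> / sqrt 2" by (intro divide_right_mono) auto
        also have "\<dots> \<le> 2*\<bar>U\<bar>" using s2 by (simp add: divide_le_eq mult_le_cancel_left1)
        finally show ?thesis .
      qed
      have b: "ln (real j) / 2 \<le> ln (real j) / sqrt 2"
        using lnj by (intro divide_left_mono) (auto simp: sqrt2_less_2 less_imp_le)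
      have "(2*U - ln (real j)) / sqrt 2 = 2*U / sqrt 2 - ln (real j) / sqrt 2" by (simp add: diff_divide_distrib)
      then show ?thesis using a b by linarith
    qed
    finally have A: "(e i + e j) / sqrt 2 \<le> 2 * \<bar>U\<bar> - ln (real j) / 2" .
    have "C * \<bar>z i j\<bar> \<le> C * (4 * sqrt (ln (real j)))"
      using J[of j i] that C unfolding J'_def by (intro mult_left_mono) auto
    also have "\<dots> = 4 * C * sqrt (ln (real j))" by simp
    also have "\<dots> \<le> (sqrt (ln (real j)))^2 / 4 + 16 * C^2" by (rule amgm_aux)
    also have "\<dots> = ln (real j) / 4 + 16 * C^2" using lnj by simp
    finally have B: "C * \<bar>z i j\<bar> \<le> ln (real j) / 4 + 16 * C^2" .
    have "ln (real j) / 4 > R" using \<open>ln (real j) > 4 * R\<close> by simp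
    then show ?thesis using A B unfolding R_def by linarith
  qed
  have "{p\<in>{(i, j). 1 \<le> i \<and> i < j}. (e (fst p) + e (snd p)) / sqrt 2 + C * \<bar>z (fst p) (snd p)\<bar> \<ge> K}
      \<subseteq> {..<J'} \<times> {..<J'}"
  proof
    fix p assume p: "p \<in> {p\<in>{(i, j). 1 \<le> i \<and> i < j}. (e (fst p) + e (snd p)) / sqrt 2 + C * \<bar>z (fst p) (snd p)\<bar> \<ge> K}"
    obtain i j where ij: "p = (i, j)" by (cases p)
    have "\<not> J' \<le> j" using key[of i j] p ij by fastforce
    then show "p \<in> {..<J'} \<times> {..<J'}" using p ij by auto
  qed
  then show ?thesis by (rule finite_subset) auto
qed

lemma erlang_pt:
  fixes x r :: real
  shows "ennreal (erlang_density n 1 x) * indicator {..r} x \<le> ennreal (exp r / 2^(Suc n)) * ennreal (erlang_density n 2 x)"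
proof (cases "x < 0 \<or> x > r")
  case True
  then show ?thesis by (auto simp: erlang_density_def indicator_def)
next
  case False
  then have x: "0 \<le> x" "x \<le> r" by auto
  have "exp (-x) \<le> exp r * exp (-2*x)" 
    using x by (simp add: mult_exp_exp)
  then have "x^n * exp (-x) / fact n \<le> x^n * (exp r * exp (-2*x)) / fact n"
    using x by (intro divide_right_mono mult_left_mono) auto
  also have "\<dots> = exp r / 2^(Suc n) * (2^(Suc n) * x^n * exp (- 2 * x) / fact n)"
  proof -
    have "(2::real)^(Suc n) \<noteq> 0" by simp
    then show ?thesis by (simp add: divide_simps)
  qed
  finally have le: "x^n * exp (-x) / fact n \<le> exp r / 2^(Suc n) * (2^(Suc n) * x^n * exp (- 2 * x) / fact n)" .
  have e1: "erlang_density n 1 x = x^n * exp (-x) / fact n"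
    using x unfolding erlang_density_def by simp
  have e2: "erlang_density n 2 x = 2^(Suc n) * x^n * exp (- 2 * x) / fact n"
    using x unfolding erlang_density_def by simp
  have c0: "0 \<le> exp r / 2^(Suc n)" by simp
  have d0: "0 \<le> erlang_density n 2 x" by simp
  have ind: "indicator {..r} x = (1::ennreal)" using x by simp
  have "ennreal (erlang_density n 1 x) \<le> ennreal (exp r / 2^(Suc n) * erlang_density n 2 x)"
    by (rule ennreal_leI) (unfold e1 e2, rule le)
  then show ?thesis unfolding ind mult.right_neutral ennreal_mult[OF c0 d0, symmetric] .
qed

lemma erlang_tail_bound:
  fixes r :: real
  shows "(\<integral>\<^sup>+x. ennreal (erlang_density n 1 x) * indicator {..r} x \<partial>lborel) \<le> ennreal (exp r / 2^(Suc n))"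
proof -
  have "(\<integral>\<^sup>+x. ennreal (erlang_density n 1 x) * indicator {..r} x \<partial>lborel)
     \<le> (\<integral>\<^sup>+x. ennreal (exp r / 2^(Suc n)) * ennreal (erlang_density n 2 x) \<partial>lborel)"
    by (intro nn_integral_mono erlang_pt)
  also have "\<dots> = ennreal (exp r / 2^(Suc n)) * (\<integral>\<^sup>+x. ennreal (erlang_density n 2 x) \<partial>lborel)"
    by (rule nn_integral_cmult) auto
  also have "(\<integral>\<^sup>+x. ennreal (erlang_density n 2 x) \<partial>lborel) = 1"
  proof -
    interpret P: prob_space "density lborel (erlang_density n 2)"
      by (rule prob_space_erlang_density) simp
    have "emeasure (density lborel (erlang_density n 2)) UNIV = 1"
      using P.emeasure_space_1 by simp
    then show ?thesis by (simp add: emeasure_density)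
  qed
  finally show ?thesis by simp
qed

lemma gauss_pt:
  fixes x t :: real
  assumes t: "0 \<le> t"
  shows "ennreal (std_normal_density x) * indicator {x. t < abs x} x \<le> ennreal (exp (-(t^2)/4) * sqrt 2) * ennreal (normal_density 0 (sqrt 2) x)"
proof (cases "t < abs x")
  case False
  then show ?thesis by (simp add: indicator_def)
next
  case True
  then have "t^2 \<le> (abs x)^2" using t
    by (intro power_mono) auto
  then have "t^2 \<le> x^2" by simp
  then have e: "exp (-(x^2)/2) \<le> exp (-(t^2)/4) * exp (-(x^2)/4)"
    by (simp add: mult_exp_exp)
  have nd: "normal_density 0 (sqrt 2) x = 1 / (sqrt 2 * sqrt (2*pi)) * exp (-(x^2)/4)"
    by (simp add: normal_density_def real_sqrt_mult[symmetric] mult.assoc)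
  have "std_normal_density x = 1 / sqrt (2*pi) * exp (-(x^2)/2)"
    by (simp add: std_normal_density_def)
  also have "\<dots> \<le> 1 / sqrt (2*pi) * (exp (-(t^2)/4) * exp (-(x^2)/4))"
    using e by (intro mult_left_mono) auto
  also have "\<dots> = exp (-(t^2)/4) * sqrt 2 * normal_density 0 (sqrt 2) x"
  proof -
    have "sqrt (2::real) \<noteq> 0" by simp
    then show ?thesis unfolding nd by (simp add: divide_simps)
  qed
  finally have le: "std_normal_density x \<le> exp (-(t^2)/4) * sqrt 2 * normal_density 0 (sqrt 2) x" .
  have c0: "0 \<le> exp (-(t^2)/4) * sqrt 2" by simp
  have d0: "0 \<le> normal_density 0 (sqrt 2) x" by (rule normal_density_nonneg)
  have ind: "indicator {x. t < abs x} x = (1::ennreal)" using True by simp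
  have "ennreal (std_normal_density x) \<le> ennreal (exp (-(t^2)/4) * sqrt 2 * normal_density 0 (sqrt 2) x)"
    by (rule ennreal_leI) (rule le)
  then show ?thesis unfolding ind mult.right_neutral ennreal_mult[OF c0 d0, symmetric] .
qed

lemma gauss_tail_bound:
  fixes t :: real
  assumes t: "0 \<le> t"
  shows "(\<integral>\<^sup>+x. ennreal (std_normal_density x) * indicator {x. t < abs x} x \<partial>lborel) \<le> ennreal (exp (-(t^2)/4) * sqrt 2)"
proof -
  have "(\<integral>\<^sup>+x. ennreal (std_normal_density x) * indicator {x. t < abs x} x \<partial>lborel)
     \<le> (\<integral>\<^sup>+x. ennreal (exp (-(t^2)/4) * sqrt 2) * ennreal (normal_density 0 (sqrt 2) x) \<partial>lborel)"
    by (intro nn_integral_mono gauss_pt t)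
  also have "\<dots> = ennreal (exp (-(t^2)/4) * sqrt 2) * (\<integral>\<^sup>+x. ennreal (normal_density 0 (sqrt 2) x) \<partial>lborel)"
    by (rule nn_integral_cmult) auto
  also have "(\<integral>\<^sup>+x. ennreal (normal_density 0 (sqrt 2) x) \<partial>lborel) = 1"
  proof -
    interpret P: prob_space "density lborel (normal_density 0 (sqrt 2))"
      by (rule prob_space_normal_density) simp
    have "emeasure (density lborel (normal_density 0 (sqrt 2))) UNIV = 1"
      using P.emeasure_space_1 by simp
    then show ?thesis by (simp add: emeasure_density)
  qed
  finally show ?thesis by simp
qed

lemma good1:
  fixes M :: "'a measure"
    and \<zeta> :: "nat \<Rightarrow> 'a \<Rightarrow> real"
    and Z :: "nat \<Rightarrow> nat \<Rightarrow> 'a \<Rightarrow> real"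
  assumes "prob_space M"
    and exp: "\<And>k. 1 \<le> k \<Longrightarrow> distributed M lborel (\<zeta> k) (exponential_density 1)"
    and indep: "prob_space.indep_vars M (\<lambda>_. borel) (joint_family \<zeta> Z) joint_index"
  shows "AE \<omega> in M. \<exists>N. \<forall>n\<ge>N. real n / 2 < (\<Sum>k\<in>{1..n}. \<zeta> k \<omega>)"
proof -
  interpret prob_space M by fact
  have mz: "\<zeta> k \<in> borel_measurable M" if "1 \<le> k" for k
    using distributed_measurable[OF exp[OF that]] by simp
  have ms[measurable]: "(\<lambda>\<omega>. \<Sum>k\<in>{1..n}. \<zeta> k \<omega>) \<in> borel_measurable M" for n
    by (rule borel_measurable_sum) (use mz in auto)
  define A where "A n = {\<omega>\<in>space M. (\<Sum>k\<in>{1..Suc n}. \<zeta> k \<omega>) \<le> real (Suc n) / 2}" for n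
  have Am[measurable]: "A n \<in> sets M" for n unfolding A_def by measurable
  define q :: real where "q = exp (1/2) / 2"
  have D: "distributed M lborel (\<lambda>\<omega>. \<Sum>k\<in>{1..Suc n}. \<zeta> k \<omega>) (erlang_density n 1)" for n
  proof -
    have "distributed M lborel (\<lambda>x. \<Sum>i\<in>Inl ` {1..Suc n}. joint_family \<zeta> Z i x)
            (erlang_density (card (Inl ` {1..Suc n} :: (nat + nat \<times> nat) set) - 1) 1)"
    proof (rule exponential_distributed_sum)
      show "indep_vars (\<lambda>i. borel) (joint_family \<zeta> Z) (Inl ` {1..Suc n})"
        by (rule indep_vars_subset[OF indep]) (auto simp: joint_index_def)
    qed (auto simp: joint_family_def intro!: exp)
    moreover have "card (Inl ` {1..Suc n} :: (nat + nat \<times> nat) set) = Suc n"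
      by (simp add: card_image)
    moreover have "(\<lambda>x. \<Sum>i\<in>Inl ` {1..Suc n}. joint_family \<zeta> Z i x) = (\<lambda>\<omega>. \<Sum>k\<in>{1..Suc n}. \<zeta> k \<omega>)"
      by (simp add: sum.reindex joint_family_def)
    ultimately show ?thesis by simp
  qed
  have bnd: "measure M (A n) \<le> q ^ Suc n" for n
  proof -
    have "A n = (\<lambda>\<omega>. \<Sum>k\<in>{1..Suc n}. \<zeta> k \<omega>) -` {..real (Suc n) / 2} \<inter> space M"
      unfolding A_def by auto
    then have "emeasure M (A n) = (\<integral>\<^sup>+x. ennreal (erlang_density n 1 x) * indicator {..real (Suc n) / 2} x \<partial>lborel)"
      using distributed_emeasure[OF D[of n], of "{..real (Suc n) / 2}"] by simp
    also have "\<dots> \<le> ennreal (exp (real (Suc n) / 2) / 2^(Suc n))"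
      by (rule erlang_tail_bound)
    also have "exp (real (Suc n) / 2) / 2^(Suc n) = q ^ Suc n"
    proof -
      have "exp (real (Suc n) / 2) = exp (1/2) ^ Suc n"
        using exp_of_nat_mult[of "Suc n" "1/2::real"] by simp
      then show ?thesis unfolding q_def by (simp add: power_divide)
    qed
    finally have "ennreal (measure M (A n)) \<le> ennreal (q ^ Suc n)"
      by (simp add: emeasure_eq_measure del: power_Suc)
    moreover have "0 \<le> q ^ Suc n" unfolding q_def by simp
    ultimately show ?thesis by (simp only: ennreal_le_iff)
  qed
  have q: "0 \<le> q" "q < 1"
  proof -
    show "0 \<le> q" unfolding q_def by simp
    have "exp (1/2::real) ^ 2 = exp 1"
      using exp_of_nat_mult[of 2 "1/2::real"] by simp
    then have "exp (1/2::real) ^ 2 < 2 ^ 2" using exp_le by simp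
    then have "exp (1/2::real) < 2"
      using power_less_imp_less_base by fastforce
    then show "q < 1" unfolding q_def by simp
  qed
  have sq: "summable (\<lambda>n. q ^ Suc n)"
    using summable_geometric[of q] q by (simp add: summable_Suc_iff)
  have sA: "summable (\<lambda>n. measure M (A n))"
    by (rule summable_comparison_test[OF _ sq]) (use bnd in auto)
  have BC: "AE \<omega> in M. eventually (\<lambda>n. \<omega> \<in> space M - A n) sequentially"
    by (rule borel_cantelli_AE1) (auto simp: sA emeasure_eq_measure)
  then show ?thesis
  proof (rule eventually_mono)
    fix \<omega> assume "eventually (\<lambda>n. \<omega> \<in> space M - A n) sequentially"
    then obtain N where N: "\<And>n. n \<ge> N \<Longrightarrow> \<omega> \<in> space M - A n"
      by (auto simp: eventually_sequentially)
    show "\<exists>N. \<forall>n\<ge>N. real n / 2 < (\<Sum>k\<in>{1..n}. \<zeta> k \<omega>)"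
    proof (intro exI allI impI)
      fix n assume "Suc N \<le> n"
      then obtain m where m: "n = Suc m" "m \<ge> N" by (cases n) auto
      show "real n / 2 < (\<Sum>k\<in>{1..n}. \<zeta> k \<omega>)"
        using N[OF m(2)] unfolding A_def m(1) by auto
    qed
  qed
qed

lemma exp_ln_aux:
  assumes j: "1 \<le> j"
  shows "exp (-((4 * sqrt (ln (real j)))^2)/4) = inverse (real j ^ 4)"
proof -
  have l: "0 \<le> ln (real j)" using j by simp
  have "(4 * sqrt (ln (real j)))^2 / 4 = real 4 * ln (real j)"
    using l by (simp add: power_mult_distrib)
  then have "exp (-((4 * sqrt (ln (real j)))^2)/4) = inverse (exp (real 4 * ln (real j)))"
    by (simp add: exp_minus)
  also have "\<dots> = inverse (real j ^ 4)"
    using j by (simp only: exp_of_nat_mult) simp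
  finally show ?thesis .
qed

lemma good2:
  fixes M :: "'a measure"
    and Z :: "nat \<Rightarrow> nat \<Rightarrow> 'a \<Rightarrow> real"
  assumes "prob_space M"
    and gauss: "\<And>i j. 1 \<le> i \<Longrightarrow> i < j \<Longrightarrow> distributed M lborel (Z i j) std_normal_density"
  shows "AE \<omega> in M. \<exists>J. \<forall>j\<ge>J. \<forall>i. 1 \<le> i \<longrightarrow> i < j \<longrightarrow> \<bar>Z i j \<omega>\<bar> \<le> 4 * sqrt (ln (real j))"
proof -
  interpret prob_space M by fact
  have mZ: "Z i j \<in> borel_measurable M" if "1 \<le> i" "i < j" for i j
    using distributed_measurable[OF gauss[OF that]] by simp
  define t :: "nat \<Rightarrow> real" where "t j = 4 * sqrt (ln (real j))" for j
  define E where "E i j = Z i j -` {x. t j < abs x} \<inter> space M" for i j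
  have Em: "E i j \<in> sets M" if "1 \<le> i" "i < j" for i j
  proof -
    have "{x. t j < abs x} \<in> sets borel" by measurable
    then show ?thesis unfolding E_def using mZ[OF that] by (rule measurable_sets[rotated])
  qed
  define B where "B j = (\<Union>i\<in>{1..<j}. E i j)" for j
  have Bm[measurable]: "B j \<in> sets M" for j
    unfolding B_def by (intro sets.finite_UN) (auto intro: Em)
  have Eb: "measure M (E i j) \<le> sqrt 2 * inverse (real j ^ 4)" if "1 \<le> i" "i < j" for i j
  proof -
    have j: "1 \<le> j" using that by simp
    have t0: "0 \<le> t j" unfolding t_def using j by simp
    have "emeasure M (E i j) = (\<integral>\<^sup>+x. ennreal (std_normal_density x) * indicator {x. t j < abs x} x \<partial>lborel)"
      unfolding E_def by (rule distributed_emeasure[OF gauss[OF that]]) measurable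
    also have "\<dots> \<le> ennreal (exp (-((t j)^2)/4) * sqrt 2)"
      by (rule gauss_tail_bound[OF t0])
    also have "exp (-((t j)^2)/4) * sqrt 2 = sqrt 2 * inverse (real j ^ 4)"
      unfolding t_def using exp_ln_aux[OF j] by simp
    finally have "ennreal (measure M (E i j)) \<le> ennreal (sqrt 2 * inverse (real j ^ 4))"
      by (simp add: emeasure_eq_measure)
    moreover have "0 \<le> sqrt 2 * inverse (real j ^ 4)" by simp
    ultimately show ?thesis by (simp only: ennreal_le_iff)
  qed
  have Bb: "measure M (B j) \<le> sqrt 2 * inverse (real j ^ 2)" for j
  proof (cases "j = 0")
    case True
    then show ?thesis unfolding B_def by simp
  next
    case False
    then have j: "1 \<le> j" by simp
    have "measure M (B j) \<le> (\<Sum>i\<in>{1..<j}. measure M (E i j))"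
      unfolding B_def by (rule measure_UNION_le) (auto intro: Em)
    also have "\<dots> \<le> (\<Sum>i\<in>{1..<j}. sqrt 2 * inverse (real j ^ 4))"
      by (rule sum_mono) (auto intro: Eb)
    also have "\<dots> = real (j - 1) * (sqrt 2 * inverse (real j ^ 4))" by simp
    also have "\<dots> \<le> sqrt 2 * inverse (real j ^ 2)"
    proof -
      have "real (j - 1) \<le> real j ^ 2" using j
        by (metis diff_le_self of_nat_le_iff of_nat_power power2_nat_le_imp_le power2_eq_square le_square order_trans)
      then have "real (j - 1) * inverse (real j ^ 4) \<le> real j ^ 2 * inverse (real j ^ 4)"
        by (intro mult_right_mono) auto
      also have "\<dots> = inverse (real j ^ 2)" using j by (simp add: field_simps power_eq_if)
      finally show ?thesis by (simp add: mult.left_commute mult_left_mono)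
    qed
    finally show ?thesis .
  qed
  have sB: "summable (\<lambda>j. measure M (B j))"
  proof (rule summable_comparison_test[OF _ summable_mult[OF inverse_power_summable[of 2]]])
    show "\<exists>N. \<forall>n\<ge>N. norm (measure M (B n)) \<le> sqrt 2 * inverse (real n ^ 2)"
      using Bb by auto
  qed simp
  have BC: "AE \<omega> in M. eventually (\<lambda>n. \<omega> \<in> space M - B n) sequentially"
    by (rule borel_cantelli_AE1) (auto simp: sB emeasure_eq_measure)
  then show ?thesis
  proof (rule eventually_mono)
    fix \<omega> assume "eventually (\<lambda>n. \<omega> \<in> space M - B n) sequentially"
    then obtain N where N: "\<And>n. n \<ge> N \<Longrightarrow> \<omega> \<in> space M - B n"
      by (auto simp: eventually_sequentially)
    show "\<exists>J. \<forall>j\<ge>J. \<forall>i. 1 \<le> i \<longrightarrow> i < j \<longrightarrow> \<bar>Z i j \<omega>\<bar> \<le> 4 * sqrt (ln (real j))"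
    proof (intro exI allI impI)
      fix j i assume "N \<le> j" "1 \<le> i" "i < j"
      then show "\<bar>Z i j \<omega>\<bar> \<le> 4 * sqrt (ln (real j))"
        using N[of j] unfolding B_def E_def t_def by (force simp: not_less)
    qed
  qed
qed

lemma det_U:
  fixes G :: "nat \<Rightarrow> real"
  assumes N: "\<forall>n\<ge>N. real n / 2 < G n"
  shows "\<exists>U. \<forall>i\<ge>1. - ln (G i) \<le> U - ln (real i)"
proof (intro exI allI impI)
  fix i :: nat assume i: "1 \<le> i"
  define S where "S = (\<Sum>k<N. \<bar>- ln (G k) + ln (real k)\<bar>)"
  have S0: "0 \<le> S" unfolding S_def by (rule sum_nonneg) auto
  show "- ln (G i) \<le> (ln 2 + S) - ln (real i)"
  proof (cases "i < N")
    case True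
    have "- ln (G i) + ln (real i) \<le> \<bar>- ln (G i) + ln (real i)\<bar>" by simp
    also have "\<dots> \<le> S" unfolding S_def
      by (rule member_le_sum) (use True in auto)
    finally have "ln (real i) - ln (G i) \<le> S" by simp
    moreover have "0 \<le> ln (2::real)" by simp
    ultimately show ?thesis by linarith
  next
    case False
    then have g: "real i / 2 < G i" using N by simp
    have ip: "0 < real i / 2" using i by simp
    then have "ln (real i / 2) < ln (G i)" using g by simp
    moreover have "ln (real i / 2) = ln (real i) - ln 2" using i by (simp add: ln_div)
    ultimately show ?thesis using S0 by simp
  qed
qed

theorem lemma9p3:
  fixes M :: "'a measure"
    and \<zeta> :: "nat \<Rightarrow> 'a \<Rightarrow> real"
    and Z :: "nat \<Rightarrow> nat \<Rightarrow> 'a \<Rightarrow> real"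
  assumes "prob_space M"
    and exp: "\<And>k. 1 \<le> k \<Longrightarrow> distributed M lborel (\<zeta> k) (exponential_density 1)"
    and gauss: "\<And>i j. 1 \<le> i \<Longrightarrow> i < j \<Longrightarrow> distributed M lborel (Z i j) std_normal_density"
    and indep: "prob_space.indep_vars M (\<lambda>_. borel) (joint_family \<zeta> Z) joint_index"
  shows "(\<forall>c\<ge>0. AE \<omega> in M. Y_rv \<zeta> Z c \<omega> < \<infinity>)
       \<and> (\<forall>c (\<gamma> :: nat \<Rightarrow> real). (\<forall>m. 0 \<le> \<gamma> m) \<longrightarrow> \<gamma> \<longlonglongrightarrow> c \<longrightarrow>
            weak_conv_m (\<lambda>m. distr M borel (\<lambda>\<omega>. real_of_ereal (Y_rv \<zeta> Z (\<gamma> m) \<omega>)))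
                        (distr M borel (\<lambda>\<omega>. real_of_ereal (Y_rv \<zeta> Z c \<omega>))))"
proof -
  interpret prob_space M by fact
  define P :: "(nat \<times> nat) set" where "P = {(i, j). 1 \<le> i \<and> i < j}"
  define a where "a \<omega> p = (eta_rv \<zeta> (fst p) \<omega> + eta_rv \<zeta> (snd p) \<omega>) / sqrt 2" for \<omega> p
  define b where "b \<omega> p = Z (fst p) (snd p) \<omega>" for \<omega> p
  have Yeq: "Y_rv \<zeta> Z c \<omega> = (SUP p\<in>P. ereal (a \<omega> p + c * b \<omega> p))" for c \<omega>
    unfolding Y_rv_def a_def b_def P_def ..
  define Good where "Good \<omega> \<longleftrightarrow> (\<forall>C\<ge>0. \<forall>K. finite {p\<in>P. a \<omega> p + C * \<bar>b \<omega> p\<bar> \<ge> K})" for \<omega>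
  have g1: "AE \<omega> in M. \<exists>N. \<forall>n\<ge>N. real n / 2 < (\<Sum>k\<in>{1..n}. \<zeta> k \<omega>)"
    by (rule good1[OF assms(1)]) (use exp indep in auto)
  have g2: "AE \<omega> in M. \<exists>J. \<forall>j\<ge>J. \<forall>i. 1 \<le> i \<longrightarrow> i < j \<longrightarrow> \<bar>Z i j \<omega>\<bar> \<le> 4 * sqrt (ln (real j))"
    by (rule good2[OF assms(1)]) (use gauss in auto)
  have good: "AE \<omega> in M. Good \<omega>"
    using g1 g2
  proof eventually_elim
    case (elim \<omega>)
    from elim(1) obtain N where N: "\<forall>n\<ge>N. real n / 2 < (\<Sum>k\<in>{1..n}. \<zeta> k \<omega>)" by blast
    from det_U[OF N] obtain U where U: "\<forall>i\<ge>1. - ln (\<Sum>k\<in>{1..i}. \<zeta> k \<omega>) \<le> U - ln (real i)" by blast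
    from elim(2) obtain J where J: "\<forall>j\<ge>J. \<forall>i. 1 \<le> i \<longrightarrow> i < j \<longrightarrow> \<bar>Z i j \<omega>\<bar> \<le> 4 * sqrt (ln (real j))" by blast
    show ?case unfolding Good_def
    proof (intro allI impI)
      fix C K :: real assume C: "0 \<le> C"
      have "finite {p\<in>{(i, j). 1 \<le> i \<and> i < j}. (eta_rv \<zeta> (fst p) \<omega> + eta_rv \<zeta> (snd p) \<omega>) / sqrt 2 + C * \<bar>Z (fst p) (snd p) \<omega>\<bar> \<ge> K}"
        by (rule det_fin[where U=U and J=J]) (use U J C in \<open>auto simp: eta_rv_def\<close>)
      then show "finite {p\<in>P. a \<omega> p + C * \<bar>b \<omega> p\<bar> \<ge> K}"
        unfolding P_def a_def b_def .
    qed
  qed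
  have p0: "(1, 2) \<in> P" unfolding P_def by simp
  define F where "F \<omega> C = {p\<in>P. a \<omega> p + C * \<bar>b \<omega> p\<bar> \<ge> a \<omega> (1,2) - C * \<bar>b \<omega> (1,2)\<bar>}" for \<omega> C
  have Ysup: "Y_rv \<zeta> Z \<gamma> \<omega> = ereal (Max ((\<lambda>p. a \<omega> p + \<gamma> * b \<omega> p) ` F \<omega> C))"
    if "Good \<omega>" "\<bar>\<gamma>\<bar> \<le> C" for \<omega> \<gamma> C
  proof -
    have C: "0 \<le> C" using that(2) by linarith
    show ?thesis unfolding Yeq F_def
      by (rule sup_fin[OF _ p0 that(2)]) (use that(1) C in \<open>auto simp: Good_def\<close>)
  qed
  have Ffin: "finite (F \<omega> C)" "F \<omega> C \<noteq> {}" if "Good \<omega>" "0 \<le> C" for \<omega> C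
  proof -
    show "finite (F \<omega> C)" using that unfolding F_def Good_def by auto
    have "(1, 2) \<in> F \<omega> C" using that p0 unfolding F_def by simp
    then show "F \<omega> C \<noteq> {}" by blast
  qed
  have part1: "\<forall>c\<ge>0. AE \<omega> in M. Y_rv \<zeta> Z c \<omega> < \<infinity>"
  proof (intro allI impI)
    fix c :: real assume c: "0 \<le> c"
    from good show "AE \<omega> in M. Y_rv \<zeta> Z c \<omega> < \<infinity>"
    proof eventually_elim
      case (elim \<omega>)
      show ?case using Ysup[OF elim, of c c] c by simp
    qed
  qed
  have mz: "\<zeta> k \<in> borel_measurable M" if "1 \<le> k" for k
    using distributed_measurable[OF exp[OF that]] by simp
  have mZ: "Z i j \<in> borel_measurable M" if "1 \<le> i" "i < j" for i j
    using distributed_measurable[OF gauss[OF that]] by simp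
  have ms[measurable]: "(\<lambda>\<omega>. \<Sum>k\<in>{1..n}. \<zeta> k \<omega>) \<in> borel_measurable M" for n
    by (rule borel_measurable_sum) (use mz in auto)
  have meta[measurable]: "eta_rv \<zeta> i \<in> borel_measurable M" for i
    unfolding eta_rv_def[abs_def] by measurable
  have mY: "(\<lambda>\<omega>. Y_rv \<zeta> Z c \<omega>) \<in> borel_measurable M" for c
    unfolding Yeq
  proof (rule borel_measurable_SUP)
    show "countable P" by (rule countable_subset[OF subset_UNIV]) simp
    fix p assume "p \<in> P"
    then obtain i j where p: "p = (i, j)" "1 \<le> i" "i < j" unfolding P_def by auto
    have [measurable]: "Z i j \<in> borel_measurable M" by (rule mZ) (use p in auto)
    show "(\<lambda>\<omega>. ereal (a \<omega> p + c * b \<omega> p)) \<in> borel_measurable M"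
      unfolding a_def b_def p fst_conv snd_conv by measurable
  qed
  have mX[measurable]: "(\<lambda>\<omega>. real_of_ereal (Y_rv \<zeta> Z c \<omega>)) \<in> borel_measurable M" for c
    using mY[of c] by measurable
  have part2: "weak_conv_m (\<lambda>m. distr M borel (\<lambda>\<omega>. real_of_ereal (Y_rv \<zeta> Z (\<gamma> m) \<omega>)))
                        (distr M borel (\<lambda>\<omega>. real_of_ereal (Y_rv \<zeta> Z c \<omega>)))"
    if "\<forall>m. 0 \<le> \<gamma> m" "\<gamma> \<longlonglongrightarrow> c" for c and \<gamma> :: "nat \<Rightarrow> real"
  proof -
    have conv: "AE \<omega> in M. (\<lambda>m. real_of_ereal (Y_rv \<zeta> Z (\<gamma> m) \<omega>)) \<longlonglongrightarrow> real_of_ereal (Y_rv \<zeta> Z c \<omega>)"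
      using good
    proof eventually_elim
      case (elim \<omega>)
      define C where "C = \<bar>c\<bar> + 1"
      have C0: "0 \<le> C" unfolding C_def by simp
      have ev: "eventually (\<lambda>m. \<bar>\<gamma> m\<bar> \<le> C) sequentially"
      proof -
        have "eventually (\<lambda>m. dist (\<gamma> m) c < 1) sequentially"
          using that(2) by (rule tendstoD) simp
        then show ?thesis
          by (rule eventually_mono) (auto simp: C_def dist_real_def)
      qed
      have T: "(\<lambda>m. Max ((\<lambda>p. a \<omega> p + \<gamma> m * b \<omega> p) ` F \<omega> C)) \<longlonglongrightarrow> Max ((\<lambda>p. a \<omega> p + c * b \<omega> p) ` F \<omega> C)"
        by (rule tendsto_Max_fin[OF Ffin[OF elim C0]]) (intro tendsto_intros that(2))
      have E1: "real_of_ereal (Y_rv \<zeta> Z c \<omega>) = Max ((\<lambda>p. a \<omega> p + c * b \<omega> p) ` F \<omega> C)"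
      proof -
        have "\<bar>c\<bar> \<le> C" unfolding C_def by simp
        from Ysup[OF elim this] show ?thesis by simp
      qed
      have E2: "eventually (\<lambda>m. Max ((\<lambda>p. a \<omega> p + \<gamma> m * b \<omega> p) ` F \<omega> C) = real_of_ereal (Y_rv \<zeta> Z (\<gamma> m) \<omega>)) sequentially"
        using ev
      proof (rule eventually_mono)
        fix m assume "\<bar>\<gamma> m\<bar> \<le> C"
        from Ysup[OF elim this] show "Max ((\<lambda>p. a \<omega> p + \<gamma> m * b \<omega> p) ` F \<omega> C) = real_of_ereal (Y_rv \<zeta> Z (\<gamma> m) \<omega>)"
          by simp
      qed
      have "(\<lambda>m. real_of_ereal (Y_rv \<zeta> Z (\<gamma> m) \<omega>)) \<longlonglongrightarrow> Max ((\<lambda>p. a \<omega> p + c * b \<omega> p) ` F \<omega> C)"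
        by (rule Lim_transform_eventually[OF T E2])
      then show ?case unfolding E1 .
    qed
    show ?thesis
    proof (rule integral_bdd_continuous_conv_imp_weak_conv)
      fix f :: "real \<Rightarrow> real" assume f: "\<And>x. isCont f x" "\<And>x. \<bar>f x\<bar> \<le> 1"
      have fm[measurable]: "f \<in> borel_measurable borel"
        by (rule borel_measurable_continuous_onI) (simp add: continuous_at_imp_continuous_on f)
      have "(\<lambda>m. integral\<^sup>L M (\<lambda>\<omega>. f (real_of_ereal (Y_rv \<zeta> Z (\<gamma> m) \<omega>))))
             \<longlonglongrightarrow> integral\<^sup>L M (\<lambda>\<omega>. f (real_of_ereal (Y_rv \<zeta> Z c \<omega>)))"
      proof (rule integral_dominated_convergence[where w="\<lambda>_. 1"])
        show "AE \<omega> in M. (\<lambda>m. f (real_of_ereal (Y_rv \<zeta> Z (\<gamma> m) \<omega>))) \<longlonglongrightarrow> f (real_of_ereal (Y_rv \<zeta> Z c \<omega>))"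
          using conv by eventually_elim (rule isCont_tendsto_compose[OF f(1)])
      qed (use f(2) in auto)
      then show "(\<lambda>m. integral\<^sup>L (distr M borel (\<lambda>\<omega>. real_of_ereal (Y_rv \<zeta> Z (\<gamma> m) \<omega>))) f)
             \<longlonglongrightarrow> integral\<^sup>L (distr M borel (\<lambda>\<omega>. real_of_ereal (Y_rv \<zeta> Z c \<omega>))) f"
        by (simp add: integral_distr)
    qed (auto intro!: real_distribution_distr)
  qed
  show ?thesis
  proof (rule conjI[OF part1], intro allI impI)
    fix c and \<gamma> :: "nat \<Rightarrow> real"
    assume "\<forall>m. 0 \<le> \<gamma> m" "\<gamma> \<longlonglongrightarrow> c"
    then show "weak_conv_m (\<lambda>m. distr M borel (\<lambda>\<omega>. real_of_ereal (Y_rv \<zeta> Z (\<gamma> m) \<omega>)))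
                        (distr M borel (\<lambda>\<omega>. real_of_ereal (Y_rv \<zeta> Z c \<omega>)))"
      by (rule part2)
  qed
qed

end
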